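(* Let $q\ge0$, let $s_0<s_1<\dots<s_q$ be distinct nodes in $[0,1]$ with $s_q=1$, and let $\{\lambda_n^{[q]}\}_{n=0}^q$ be the corresponding Lagrange basis of $\mathcal{P}^q([0,1])$. Define, for $m,n=0,\dots,q$, $$a_{mn}=\int_0^1\dot\lambda_n^{[q]}(t)\lambda_m^{[q]}(t)\,dt+\lambda_n^{[q]}(0)\lambda_m^{[q]}(0),$$ let $A=(a_{mn})_{m,n=0}^q$ (which is invertible) and $\bar A=(\bar a_{mn})=A^{-1}$. Then for every $m=0,\dots,q$, $$\sum_{n=0}^q\bar a_{mn}\lambda_n^{[q]}(0)=1.$$
   Context: $\mathcal{P}^q([0,1])$ is the space of polynomials of degree $\le q$ on $[0,1]$; the Lagrange basis for nodes $s_0,\dots,s_q$ is $\lambda_n(s)=\prod_{l\ne n}(s-s_l)/(s_n-s_l)$. *)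

theory Defs
  imports "HOL-Analysis.Analysis"
begin

definition lagrange_basis :: "(nat \<Rightarrow> real) \<Rightarrow> nat \<Rightarrow> nat \<Rightarrow> real \<Rightarrow> real" where
  "lagrange_basis s q n t = (\<Prod>l\<in>{0..q} - {n}. (t - s l) / (s n - s l))"

definition lagrange_matrix :: "(nat \<Rightarrow> real) \<Rightarrow> nat \<Rightarrow> nat \<Rightarrow> nat \<Rightarrow> real" where
  "lagrange_matrix s q m n =
     integral {0..1} (\<lambda>t. deriv (lagrange_basis s q n) t * lagrange_basis s q m t)
     + lagrange_basis s q n 0 * lagrange_basis s q m 0"

definition is_inverse_matrix :: "nat \<Rightarrow> (nat \<Rightarrow> nat \<Rightarrow> real) \<Rightarrow> (nat \<Rightarrow> nat \<Rightarrow> real) \<Rightarrow> bool" where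
  "is_inverse_matrix q A B \<longleftrightarrow>
     (\<forall>i\<le>q. \<forall>j\<le>q. (\<Sum>k\<le>q. A i k * B k j) = (if i = j then 1 else 0)) \<and>
     (\<forall>i\<le>q. \<forall>j\<le>q. (\<Sum>k\<le>q. B i k * A k j) = (if i = j then 1 else 0))"

end

theory Submission
  imports Defs "HOL-Computational_Algebra.Polynomial" "Jordan_Normal_Form.Determinant"
begin


lemma inv_exists:
  fixes A :: "nat \<Rightarrow> nat \<Rightarrow> real"
  assumes inj: "\<And>c. (\<forall>i\<le>q. (\<Sum>k\<le>q. A i k * c k) = 0) \<Longrightarrow> \<forall>k\<le>q. c k = 0"
  shows "\<exists>B. is_inverse_matrix q A B"
proof -
  define M where "M = mat (Suc q) (Suc q) (\<lambda>(i,j). A i j)"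
  have MC: "M \<in> carrier_mat (Suc q) (Suc q)" unfolding M_def by auto
  have iv: "{0..<Suc q} = {..q}" by auto
  have "Determinant.det M \<noteq> 0"
  proof
    assume "Determinant.det M = 0"
    then obtain v where v: "v \<in> carrier_vec (Suc q)" "v \<noteq> 0\<^sub>v (Suc q)" "M *\<^sub>v v = 0\<^sub>v (Suc q)"
      using det_0_iff_vec_prod_zero[OF MC] by auto
    have "\<forall>i\<le>q. (\<Sum>k\<le>q. A i k * v $ k) = 0"
    proof (intro allI impI)
      fix i assume i: "i \<le> q"
      have "(M *\<^sub>v v) $ i = 0" using v(3) i by simp
      moreover have "(M *\<^sub>v v) $ i = (\<Sum>k\<le>q. A i k * v $ k)"
        using i v(1) unfolding M_def mult_mat_vec_def scalar_prod_def
        by (simp add: iv row_def)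
      ultimately show "(\<Sum>k\<le>q. A i k * v $ k) = 0" by simp
    qed
    from inj[OF this] have "v = 0\<^sub>v (Suc q)"
      using v(1) by (intro eq_vecI) auto
    with v(2) show False by simp
  qed
  from det_non_zero_imp_unit[OF MC this, of "()"]
  obtain N where N: "N \<in> carrier_mat (Suc q) (Suc q)" "N * M = 1\<^sub>m (Suc q)" "M * N = 1\<^sub>m (Suc q)"
    unfolding Units_def ring_mat_def by auto
  define B where "B i j = N $$ (i,j)" for i j
  have "is_inverse_matrix q A B"
    unfolding is_inverse_matrix_def
  proof (intro conjI allI impI)
    fix i j assume i: "i \<le> q" and j: "j \<le> q"
    have "(M * N) $$ (i,j) = (\<Sum>k\<le>q. A i k * B k j)"
      using i j N(1) unfolding M_def B_def
      by (simp add: scalar_prod_def iv row_def col_def)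
    then show "(\<Sum>k\<le>q. A i k * B k j) = (if i = j then 1 else 0)"
      using N(3) i j by simp
    have "(N * M) $$ (i,j) = (\<Sum>k\<le>q. B i k * A k j)"
      using i j N(1) unfolding M_def B_def
      by (simp add: scalar_prod_def iv row_def col_def)
    then show "(\<Sum>k\<le>q. B i k * A k j) = (if i = j then 1 else 0)"
      using N(2) i j by simp
  qed
  then show ?thesis by blast
qed


definition LP :: "(nat \<Rightarrow> real) \<Rightarrow> nat \<Rightarrow> nat \<Rightarrow> real poly" where
  "LP s q n = (\<Prod>l\<in>{0..q} - {n}. [:- s l / (s n - s l), 1 / (s n - s l):])"

lemma lb_poly: "lagrange_basis s q n t = poly (LP s q n) t"
  unfolding lagrange_basis_def LP_def poly_prod
  by (intro prod.cong refl) (simp add: diff_divide_distrib)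

lemma LP_degree: assumes "n \<le> q" shows "degree (LP s q n) \<le> q"
proof -
  have "degree (LP s q n) \<le> sum (degree \<circ> (\<lambda>l. [:- s l / (s n - s l), 1 / (s n - s l):])) ({0..q} - {n})"
    unfolding LP_def by (rule degree_prod_sum_le) simp
  also have "\<dots> \<le> (\<Sum>l\<in>{0..q} - {n}. 1)" by (intro sum_mono) auto
  also have "\<dots> = q" using assms by simp
  finally show ?thesis .
qed

lemma lb_delta:
  assumes inj: "inj_on s {0..q}" and n: "n \<le> q" and k: "k \<le> q"
  shows "lagrange_basis s q n (s k) = (if k = n then 1 else 0)"
proof (cases "k = n")
  case True
  have "\<And>l. l \<in> {0..q} - {n} \<Longrightarrow> s n \<noteq> s l" using inj n by (auto dest: inj_onD)
  then have "(\<Prod>l\<in>{0..q} - {n}. (s n - s l) / (s n - s l)) = 1" by (intro prod.neutral) auto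
  then show ?thesis using True unfolding lagrange_basis_def by simp
next
  case False
  have "(\<Prod>l\<in>{0..q} - {n}. (s k - s l) / (s n - s l)) = 0"
    using k False by (intro prod_zero) (auto intro: bexI[of _ k])
  then show ?thesis unfolding lagrange_basis_def using False by simp
qed

lemma interp:
  fixes p :: "real poly"
  assumes inj: "inj_on s {0..q}" and deg: "degree p \<le> q"
  shows "p = (\<Sum>n\<le>q. Polynomial.smult (poly p (s n)) (LP s q n))"
proof (rule ccontr)
  define d where "d = p - (\<Sum>n\<le>q. Polynomial.smult (poly p (s n)) (LP s q n))"
  assume "p \<noteq> (\<Sum>n\<le>q. Polynomial.smult (poly p (s n)) (LP s q n))"
  then have d0: "d \<noteq> 0" unfolding d_def by simp
  have "degree (\<Sum>n\<le>q. Polynomial.smult (poly p (s n)) (LP s q n)) \<le> q"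
    by (intro degree_sum_le) (auto intro: order.trans[OF degree_smult_le] LP_degree)
  then have dd: "degree d \<le> q" unfolding d_def using deg
    by (meson degree_diff_le)
  have roots: "s ` {0..q} \<subseteq> {x. poly d x = 0}"
  proof clarify
    fix k assume k: "k \<in> {0..q}"
    have "poly (\<Sum>n\<le>q. Polynomial.smult (poly p (s n)) (LP s q n)) (s k)
        = (\<Sum>n\<le>q. poly p (s n) * (if k = n then 1 else 0))"
      unfolding poly_sum poly_smult lb_poly[symmetric]
      using lb_delta[OF inj _ , of _ k] k by (intro sum.cong) auto
    also have "\<dots> = (\<Sum>n\<le>q. if n = k then poly p (s n) else 0)" by (intro sum.cong) auto
    also have "\<dots> = poly p (s k)" using k by (simp add: sum.delta')
    finally show "poly d (s k) = 0" unfolding d_def by simp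
  qed
  have "card (s ` {0..q}) \<le> card {x. poly d x = 0}"
    by (rule card_mono[OF poly_roots_finite[OF d0] roots])
  also have "\<dots> \<le> degree d" by (rule card_poly_roots_bound[OF d0])
  finally have "Suc q \<le> q" using dd card_image[OF inj] by simp
  then show False by simp
qed

definition I :: "real poly \<Rightarrow> real" where
  "I p = integral {0..1} (poly p)"

lemma I_sum: "finite S \<Longrightarrow> I (\<Sum>n\<in>S. Polynomial.smult (c n) (f n)) = (\<Sum>n\<in>S. c n * I (f n))"
proof -
  assume S: "finite S"
  have "I (\<Sum>n\<in>S. Polynomial.smult (c n) (f n)) = integral {0..1} (\<lambda>t. \<Sum>n\<in>S. c n * poly (f n) t)"
    unfolding I_def poly_sum poly_smult by (simp add: fun_eq_iff)
  also have "\<dots> = (\<Sum>n\<in>S. integral {0..1} (\<lambda>t. c n * poly (f n) t))"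
    by (rule integral_sum[OF S]) (auto intro!: integrable_continuous_real continuous_intros)
  also have "\<dots> = (\<Sum>n\<in>S. c n * I (f n))"
    unfolding I_def by (intro sum.cong refl integral_mult_right)
  finally show ?thesis .
qed

lemma I_pderiv: "I (pderiv p) = poly p 1 - poly p 0"
proof -
  have "((poly (pderiv p)) has_integral (poly p 1 - poly p 0)) {0..1}"
    by (rule fundamental_theorem_of_calculus)
       (auto simp: has_real_derivative_iff_has_vector_derivative[symmetric]
             intro: DERIV_subset[OF poly_DERIV])
  then show ?thesis unfolding I_def by (rule integral_unique)
qed


lemma I_smult: "I (Polynomial.smult c p) = c * I p"
proof -
  have "poly (Polynomial.smult c p) = (\<lambda>t. c * poly p t)" by (simp add: fun_eq_iff)
  then show ?thesis unfolding I_def by (simp add: integral_mult_right)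
qed

lemma I_zero: "I 0 = 0"
proof -
  have "poly 0 = (\<lambda>t::real. 0::real)" by (simp add: fun_eq_iff)
  then show ?thesis unfolding I_def by simp
qed

lemma pderiv_sum': "pderiv (sum f S) = (\<Sum>x\<in>S. pderiv (f x))"
  using higher_pderiv_sum[of 1 f S] by simp

definition aF :: "real poly \<Rightarrow> real poly \<Rightarrow> real" where
  "aF u w = I (pderiv u * w) + poly u 0 * poly w 0"

lemma aF_sum1: "finite S \<Longrightarrow> aF (\<Sum>n\<in>S. Polynomial.smult (c n) (f n)) w = (\<Sum>n\<in>S. c n * aF (f n) w)"
proof -
  assume S: "finite S"
  have "pderiv (\<Sum>n\<in>S. Polynomial.smult (c n) (f n)) * w = (\<Sum>n\<in>S. Polynomial.smult (c n) (pderiv (f n) * w))"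
    by (simp add: pderiv_sum' pderiv_smult sum_distrib_right)
  then show ?thesis unfolding aF_def using S
    by (simp add: I_sum poly_sum sum_distrib_right sum.distrib distrib_left mult.assoc)
qed

lemma aF_sum2: "finite S \<Longrightarrow> aF u (\<Sum>n\<in>S. Polynomial.smult (c n) (f n)) = (\<Sum>n\<in>S. c n * aF u (f n))"
proof -
  assume S: "finite S"
  have "pderiv u * (\<Sum>n\<in>S. Polynomial.smult (c n) (f n)) = (\<Sum>n\<in>S. Polynomial.smult (c n) (pderiv u * f n))"
    by (simp add: sum_distrib_left)
  then show ?thesis unfolding aF_def using S
    by (simp add: I_sum poly_sum sum_distrib_left sum.distrib distrib_left mult_ac)
qed

lemma A_eq: "lagrange_matrix s q m n = aF (LP s q n) (LP s q m)"
proof -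
  have lb: "lagrange_basis s q k = poly (LP s q k)" for k by (simp add: fun_eq_iff lb_poly)
  have d: "deriv (poly p) t = poly (pderiv p) t" for p :: "real poly" and t
    by (rule DERIV_imp_deriv[OF poly_DERIV])
  show ?thesis unfolding lagrange_matrix_def aF_def I_def lb d poly_mult
    by (simp add: d)
qed


lemma sm2: "Polynomial.smult (2::real) p = p + p"
  using smult_add_left[of 1 1 p] by simp

lemma L1: fixes u :: "real poly" shows "pderiv (u * u) = Polynomial.smult 2 (pderiv u * u)"
proof -
  have "pderiv (u * u) = u * pderiv u + u * pderiv u" by (rule pderiv_mult)
  also have "u * pderiv u = pderiv u * u" by (rule mult.commute)
  finally show ?thesis by (simp only: sm2)
qed

lemma L2: fixes u :: "real poly" shows "2 * I (pderiv u * u) = poly u 1 ^ 2 - poly u 0 ^ 2"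
proof -
  have "I (pderiv (u*u)) = 2 * I (pderiv u * u)" by (simp only: L1 I_smult)
  moreover have "poly (u*u) x = poly u x ^ 2" for x by (simp add: power2_eq_square)
  ultimately show ?thesis using I_pderiv[of "u*u"] by simp
qed


lemma cpoly: "continuous_on A (poly p)" for p :: "real poly"
  using continuous_on_poly[of A "\<lambda>x. x" p] by (simp add: continuous_on_id)

lemma zero_poly_of_forms:
  fixes u :: "real poly"
  assumes h: "\<And>w. degree w \<le> q \<Longrightarrow> aF u w = 0" and du: "degree u \<le> q"
  shows "u = 0"
proof -
  have "2 * I (pderiv u * u) = poly u 1 ^ 2 - poly u 0 ^ 2" by (rule L2)
  moreover have "aF u u = 0" using h du by simp
  ultimately have "poly u 1 ^ 2 + poly u 0 ^ 2 = 0" unfolding aF_def power2_eq_square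
    by linarith
  then have u0: "poly u 0 = 0" by (simp add: sum_power2_eq_zero_iff)
  have "degree (pderiv u) \<le> q" using du by (simp add: degree_pderiv)
  then have "aF u (pderiv u) = 0" using h by simp
  then have Iz: "I (pderiv u * pderiv u) = 0" unfolding aF_def using u0 by simp
  have int: "(poly (pderiv u * pderiv u) has_integral 0) (cbox 0 (1::real))"
  proof -
    have "poly (pderiv u * pderiv u) integrable_on {0..1}"
      by (intro integrable_continuous_real cpoly)
    from integrable_integral[OF this] show ?thesis using Iz unfolding I_def box_real(2)
      by simp
  qed
  have z: "poly (pderiv u) x = 0" if x: "x \<in> {0..1}" for x
  proof -
    have "poly (pderiv u * pderiv u) x = 0"
    proof (rule has_integral_0_cbox_imp_0[OF _ _ int])
      show "continuous_on (cbox 0 1) (poly (pderiv u * pderiv u))" by (rule cpoly)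
      show "\<And>x. x \<in> box 0 1 \<Longrightarrow> 0 \<le> poly (pderiv u * pderiv u) x" by simp
      show "box 0 (1::real) \<noteq> {}" by simp
      show "x \<in> cbox 0 1" using x by simp
    qed
    then show ?thesis by simp
  qed
  have "pderiv u = 0"
  proof (rule ccontr)
    assume "pderiv u \<noteq> 0"
    from poly_roots_finite[OF this] have "finite {x. poly (pderiv u) x = 0}" .
    moreover have "{0..1::real} \<subseteq> {x. poly (pderiv u) x = 0}" using z by auto
    ultimately have "finite {0..1::real}" by (rule finite_subset[rotated])
    then show False using infinite_Icc[of "0::real" 1] by simp
  qed
  then obtain hc where "u = [:hc:]" using pderiv_iszero by blast
  with u0 show "u = 0" by simp
qed

theorem lemmaA2:
  fixes q :: nat and s :: "nat \<Rightarrow> real"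
  assumes incr: "\<And>i j. i < j \<Longrightarrow> j \<le> q \<Longrightarrow> s i < s j"
    and nonneg: "0 \<le> s 0"
    and last: "s q = 1"
  shows "(\<exists>B. is_inverse_matrix q (lagrange_matrix s q) B) \<and>
         (\<forall>B. is_inverse_matrix q (lagrange_matrix s q) B \<longrightarrow>
            (\<forall>m\<le>q. (\<Sum>n\<le>q. B m n * lagrange_basis s q n 0) = 1))"
proof
  have inj: "inj_on s {0..q}"
  proof (rule inj_onI)
    fix i j assume i: "i \<in> {0..q}" and j: "j \<in> {0..q}" and e: "s i = s j"
    show "i = j"
    proof (rule linorder_cases[of i j])
      assume "i < j" then show ?thesis using incr[of i j] j e by simp
    next
      assume "j < i" then show ?thesis using incr[of j i] i e by simp
    qed
  qed
  show "\<exists>B. is_inverse_matrix q (lagrange_matrix s q) B"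
  proof (rule inv_exists)
    fix c assume hc: "\<forall>i\<le>q. (\<Sum>k\<le>q. lagrange_matrix s q i k * c k) = 0"
    define u where "u = (\<Sum>k\<le>q. Polynomial.smult (c k) (LP s q k))"
    have du: "degree u \<le> q" unfolding u_def
      by (intro degree_sum_le) (auto intro: order.trans[OF degree_smult_le] LP_degree)
    have hi: "aF u (LP s q i) = 0" if i: "i \<le> q" for i
    proof -
      have "aF u (LP s q i) = (\<Sum>k\<le>q. c k * lagrange_matrix s q i k)"
        unfolding u_def by (simp add: aF_sum1 A_eq)
      also have "\<dots> = 0" using hc i by (simp add: mult.commute)
      finally show ?thesis .
    qed
    have "aF u w = 0" if dw: "degree w \<le> q" for w
    proof -
      have "aF u w = aF u (\<Sum>m\<le>q. Polynomial.smult (poly w (s m)) (LP s q m))"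
        using arg_cong[OF interp[OF inj dw], of "aF u"] .
      also have "\<dots> = 0" by (simp add: aF_sum2 hi)
      finally show ?thesis .
    qed
    from zero_poly_of_forms[OF this du] have u0: "u = 0" .
    show "\<forall>k\<le>q. c k = 0"
    proof (intro allI impI)
      fix k assume k: "k \<le> q"
      have "poly u (s k) = (\<Sum>n\<le>q. c n * (if k = n then 1 else 0))"
        unfolding u_def poly_sum poly_smult lb_poly[symmetric]
        using lb_delta[OF inj _ , of _ k] k by (intro sum.cong) auto
      also have "\<dots> = (\<Sum>n\<le>q. if n = k then c n else 0)" by (intro sum.cong) auto
      also have "\<dots> = c k" using k by (simp add: sum.delta')
      finally show "c k = 0" using u0 by simp
    qed
  qed
  show "\<forall>B. is_inverse_matrix q (lagrange_matrix s q) B \<longrightarrow>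
            (\<forall>m\<le>q. (\<Sum>n\<le>q. B m n * lagrange_basis s q n 0) = 1)"
  proof (intro allI impI)
    fix B m assume B: "is_inverse_matrix q (lagrange_matrix s q) B" and m: "m \<le> q"
    have one: "(1::real poly) = (\<Sum>n\<le>q. Polynomial.smult 1 (LP s q n))"
    proof -
      have "degree (1::real poly) \<le> q" by simp
      from interp[OF inj this] show ?thesis by (simp only: poly_1)
    qed
    have rs: "(\<Sum>k\<le>q. lagrange_matrix s q n k) = lagrange_basis s q n 0" for n
    proof -
      have "(\<Sum>k\<le>q. lagrange_matrix s q n k) = (\<Sum>k\<le>q. 1 * aF (LP s q k) (LP s q n))"
        by (simp add: A_eq)
      also have "\<dots> = aF 1 (LP s q n)"
        by (subst one) (simp only: aF_sum1 finite_atMost)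
      also have "\<dots> = lagrange_basis s q n 0"
        unfolding aF_def by (simp add: I_zero lb_poly)
      finally show ?thesis .
    qed
    have "(\<Sum>n\<le>q. B m n * lagrange_basis s q n 0)
        = (\<Sum>n\<le>q. \<Sum>k\<le>q. B m n * lagrange_matrix s q n k)"
      by (simp add: rs[symmetric] sum_distrib_left)
    also have "\<dots> = (\<Sum>k\<le>q. \<Sum>n\<le>q. B m n * lagrange_matrix s q n k)"
      by (rule sum.swap)
    also have "\<dots> = (\<Sum>k\<le>q. if m = k then 1 else 0)"
      using B m unfolding is_inverse_matrix_def by (intro sum.cong) auto
    also have "\<dots> = 1" using m by simp
    finally show "(\<Sum>n\<le>q. B m n * lagrange_basis s q n 0) = 1" .
  qed
qed

end
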